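(* Let $(G,w)$ be a weighted trigraph and let $R_1,R_2\subseteq V(G)$ be disjoint. Set $\alpha_{R_1}=\alpha(\mathrm{Red}[G,w;R_1])+\mathrm{Ext}[G,w;R_1]$ and $\alpha_{R_1\cup R_2}=\alpha(\mathrm{Red}[G,w;R_1\cup R_2])+\mathrm{Ext}[G,w;R_1\cup R_2]$. Then $\alpha_{R_1}\le\alpha_{R_1\cup R_2}\le\alpha_{R_1}+\sum_{u\in R_2}w(u)$.
   Context: A trigraph $G$ consists of a finite vertex set $V(G)$ and an adjacency function $\theta_G:\binom{V(G)}{2}\to\{-1,0,1\}$; for distinct $u,v$ write $uv$ for $\{u,v\}$; $uv$ is semi-adjacent if $\theta_G(uv)=0$, and $u,v$ are anti-adjacent if $\theta_G(uv)\le 0$. A stable set is a set of pairwise anti-adjacent vertices. For $X\subseteq V(G)$, $G[X]$ is the trigraph on $X$ with the restricted adjacency function. $\mathbb N$ denotes the non-negative integers. For a trigraph $G$ let $D(G)=V(G)\cup\{(u,v):u,v\in V(G),u\neq v\}\cup\binom{V(G)}{2}$. A weight function for $G$ is a map $w:D(G)\to\mathbb N$ such that for all distinct $u,v$: if $uv$ is not semi-adjacent then $w(u,v)=w(v,u)=w(uv)=0$, and $w(u,v)\le w(uv)$. A weighted trigraph is a pair $(G,w)$ with $w$ a weight function for $G$. The weight of $S\subseteq V(G)$ is $\llbracket S\rrbracket_{(G,w)}=\sum_{u\in S}w(u)+\sum_{u\in S}\sum_{v\in V(G)\setminus S}w(u,v)+\sum_{uv\in\binom{V(G)\setminus S}{2}}w(uv)$,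 and $\alpha(G,w)=\max\{\llbracket S\rrbracket_{(G,w)}: S \text{ a stable set of } G\}$. For $R\subseteq V(G)$, the reduction $\mathrm{Red}[G,w;R]$ is the weighted trigraph $(G[R],w')$ where $w'(u)=\max\{w(u)-\sum_{v\in V(G)\setminus R}(w(uv)-w(u,v)),0\}$ for $u\in R$, and $w'(u,v)=w(u,v)$, $w'(uv)=w(uv)$ for distinct $u,v\in R$. The exterior weight is $\mathrm{Ext}[G,w;R]=\sum_{uv\in\binom{V(G)\setminus R}{2}}w(uv)+\sum_{u\in R}\sum_{v\in V(G)\setminus R}w(uv)$. *)

theory Defs
  imports Main
begin

definition pairs :: "'a set \<Rightarrow> 'a set set" where
  "pairs X = {e. e \<subseteq> X \<and> card e = 2}"

definition trigraph :: "'a set \<Rightarrow> ('a set \<Rightarrow> int) \<Rightarrow> bool" where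
  "trigraph V \<theta> \<longleftrightarrow> finite V \<and> (\<forall>e\<in>pairs V. \<theta> e \<in> {-1, 0, 1})"

text \<open>A weight function w : D(G) -> N is given by three components:
  wv on vertices, wo on ordered pairs (u,v), wu on unordered pairs uv.\<close>

definition weight_function ::
  "'a set \<Rightarrow> ('a set \<Rightarrow> int) \<Rightarrow> ('a \<Rightarrow> nat) \<Rightarrow> ('a \<Rightarrow> 'a \<Rightarrow> nat) \<Rightarrow> ('a set \<Rightarrow> nat) \<Rightarrow> bool" where
  "weight_function V \<theta> wv wo wu \<longleftrightarrow>
     (\<forall>u\<in>V. \<forall>v\<in>V. u \<noteq> v \<longrightarrow>
        (\<theta> {u, v} \<noteq> 0 \<longrightarrow> wo u v = 0 \<and> wo v u = 0 \<and> wu {u, v} = 0) \<and>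
        wo u v \<le> wu {u, v})"

definition stable_set :: "'a set \<Rightarrow> ('a set \<Rightarrow> int) \<Rightarrow> 'a set \<Rightarrow> bool" where
  "stable_set V \<theta> S \<longleftrightarrow> S \<subseteq> V \<and> (\<forall>u\<in>S. \<forall>v\<in>S. u \<noteq> v \<longrightarrow> \<theta> {u, v} \<le> 0)"

definition set_weight ::
  "'a set \<Rightarrow> ('a \<Rightarrow> nat) \<Rightarrow> ('a \<Rightarrow> 'a \<Rightarrow> nat) \<Rightarrow> ('a set \<Rightarrow> nat) \<Rightarrow> 'a set \<Rightarrow> nat" where
  "set_weight V wv wo wu S =
     (\<Sum>u\<in>S. wv u) + (\<Sum>u\<in>S. \<Sum>v\<in>V - S. wo u v) + (\<Sum>e\<in>pairs (V - S). wu e)"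

definition alpha ::
  "'a set \<Rightarrow> ('a set \<Rightarrow> int) \<Rightarrow> ('a \<Rightarrow> nat) \<Rightarrow> ('a \<Rightarrow> 'a \<Rightarrow> nat) \<Rightarrow> ('a set \<Rightarrow> nat) \<Rightarrow> nat" where
  "alpha V \<theta> wv wo wu = Max {set_weight V wv wo wu S | S. stable_set V \<theta> S}"

text \<open>Vertex weights of the reduction Red[G,w;R]; the trigraph is G[R] (vertex set R,
  restricted theta) and the pair weights are unchanged.\<close>

definition red_wv ::
  "'a set \<Rightarrow> ('a \<Rightarrow> nat) \<Rightarrow> ('a \<Rightarrow> 'a \<Rightarrow> nat) \<Rightarrow> ('a set \<Rightarrow> nat) \<Rightarrow> 'a set \<Rightarrow> 'a \<Rightarrow> nat" where
  "red_wv V wv wo wu R u =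
     nat (max (int (wv u) - (\<Sum>v\<in>V - R. int (wu {u, v}) - int (wo u v))) 0)"

definition ext_weight ::
  "'a set \<Rightarrow> ('a set \<Rightarrow> nat) \<Rightarrow> 'a set \<Rightarrow> nat" where
  "ext_weight V wu R = (\<Sum>e\<in>pairs (V - R). wu e) + (\<Sum>u\<in>R. \<Sum>v\<in>V - R. wu {u, v})"

definition alpha_red ::
  "'a set \<Rightarrow> ('a set \<Rightarrow> int) \<Rightarrow> ('a \<Rightarrow> nat) \<Rightarrow> ('a \<Rightarrow> 'a \<Rightarrow> nat) \<Rightarrow> ('a set \<Rightarrow> nat) \<Rightarrow> 'a set \<Rightarrow> nat" where
  "alpha_red V \<theta> wv wo wu R = alpha R \<theta> (red_wv V wv wo wu R) wo wu + ext_weight V wu R"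

end

theory Submission
  imports Defs
begin

lemma pairs_finite: "finite A \<Longrightarrow> finite (pairs A)"
  unfolding pairs_def by (rule finite_subset[of _ "Pow A"]) auto

lemma pairs_union_eq:
  assumes "A \<inter> B = {}"
  shows "pairs (A \<union> B) = pairs A \<union> pairs B \<union> (\<lambda>(a,b). {a,b}) ` (A \<times> B)"
proof (rule set_eqI)
  fix e show "e \<in> pairs (A \<union> B) \<longleftrightarrow> e \<in> pairs A \<union> pairs B \<union> (\<lambda>(a,b). {a,b}) ` (A \<times> B)"
  proof
    assume "e \<in> pairs (A \<union> B)"
    then obtain x y where e: "e = {x,y}" "x \<noteq> y" "x \<in> A \<union> B" "y \<in> A \<union> B"
      unfolding pairs_def by (auto simp: card_2_iff)
    show "e \<in> pairs A \<union> pairs B \<union> (\<lambda>(a,b). {a,b}) ` (A \<times> B)"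
    proof (cases "x \<in> A")
      case True
      show ?thesis
      proof (cases "y \<in> A")
        case True
        then show ?thesis using e \<open>x \<in> A\<close> unfolding pairs_def by auto
      next
        case False
        then have "y \<in> B" using e by auto
        then have "e \<in> (\<lambda>(a,b). {a,b}) ` (A \<times> B)"
          using e \<open>x \<in> A\<close> by (intro rev_image_eqI[of "(x,y)"]) auto
        then show ?thesis by auto
      qed
    next
      case False
      then have xB: "x \<in> B" using e by auto
      show ?thesis
      proof (cases "y \<in> A")
        case True
        then have "e \<in> (\<lambda>(a,b). {a,b}) ` (A \<times> B)"
          using e xB by (intro rev_image_eqI[of "(y,x)"]) auto
        then show ?thesis by auto
      next
        case False
        then show ?thesis using e xB unfolding pairs_def by auto
      qed
    qed
  next
    assume "e \<in> pairs A \<union> pairs B \<union> (\<lambda>(a,b). {a,b}) ` (A \<times> B)"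
    then show "e \<in> pairs (A \<union> B)"
      using assms unfolding pairs_def by (auto simp: card_2_iff) blast
  qed
qed

lemma pairs_union_sum:
  assumes "finite A" "finite B" "A \<inter> B = {}"
  shows "sum f (pairs (A \<union> B)) = sum f (pairs A) + sum f (pairs B) + (\<Sum>a\<in>A. \<Sum>b\<in>B. f {a,b})"
proof -
  have d1: "pairs A \<inter> pairs B = {}" using assms(3) unfolding pairs_def by (auto simp: card_2_iff)
  have d2: "(pairs A \<union> pairs B) \<inter> (\<lambda>(a,b). {a,b}) ` (A \<times> B) = {}"
    using assms(3) unfolding pairs_def by (auto simp: card_2_iff)
  have inj: "inj_on (\<lambda>(a,b). {a,b}) (A \<times> B)" using assms(3)
    by (auto simp: inj_on_def doubleton_eq_iff)
  have "sum f (pairs (A \<union> B)) = sum f (pairs A \<union> pairs B) + sum f ((\<lambda>(a,b). {a,b}) ` (A \<times> B))"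
    unfolding pairs_union_eq[OF assms(3)] by (rule sum.union_disjoint) (use assms d2 pairs_finite in auto)
  also have "sum f (pairs A \<union> pairs B) = sum f (pairs A) + sum f (pairs B)"
    by (rule sum.union_disjoint) (use assms d1 pairs_finite in auto)
  also have "sum f ((\<lambda>(a,b). {a,b}) ` (A \<times> B)) = (\<Sum>(a,b)\<in>A\<times>B. f {a,b})"
    by (subst sum.reindex[OF inj]) (auto intro: sum.cong)
  also have "\<dots> = (\<Sum>a\<in>A. \<Sum>b\<in>B. f {a,b})" by (rule sum.cartesian_product[symmetric])
  finally show ?thesis .
qed

lemma removal:
  assumes fV: "finite V" and SV: "S \<subseteq> V" and TS: "T \<subseteq> S"
  shows "set_weight V wv wo wu S + (\<Sum>u\<in>T. \<Sum>v\<in>V-S. wu{u,v})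
     \<le> set_weight V wv wo wu (S - T) + (\<Sum>u\<in>T. wv u) + (\<Sum>u\<in>T. \<Sum>v\<in>V-S. wo u v)"
proof -
  have fS: "finite S" using fV SV finite_subset by blast
  have fT: "finite T" using fS TS finite_subset by blast
  have e1: "(\<Sum>u\<in>S. wv u) = (\<Sum>u\<in>S-T. wv u) + (\<Sum>u\<in>T. wv u)"
    using sum.subset_diff[OF TS fS] .
  have e2: "(\<Sum>u\<in>S. \<Sum>v\<in>V-S. wo u v) = (\<Sum>u\<in>S-T. \<Sum>v\<in>V-S. wo u v) + (\<Sum>u\<in>T. \<Sum>v\<in>V-S. wo u v)"
    using sum.subset_diff[OF TS fS] .
  have m: "(\<Sum>u\<in>S-T. \<Sum>v\<in>V-S. wo u v) \<le> (\<Sum>u\<in>S-T. \<Sum>v\<in>V-(S-T). wo u v)"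
    by (rule sum_mono, rule sum_mono2) (use fV in auto)
  have VS: "V - (S - T) = (V - S) \<union> T" using SV TS by auto
  have e3: "sum wu (pairs (V - (S - T))) = sum wu (pairs (V - S)) + sum wu (pairs T) + (\<Sum>a\<in>V-S. \<Sum>b\<in>T. wu {a,b})"
    unfolding VS by (rule pairs_union_sum) (use fV fT TS in auto)
  have e4: "(\<Sum>a\<in>V-S. \<Sum>b\<in>T. wu {a,b}) = (\<Sum>u\<in>T. \<Sum>v\<in>V-S. wu{u,v})"
    by (subst sum.swap) (simp add: insert_commute)
  show ?thesis unfolding set_weight_def using e1 e2 e3 e4 m by linarith
qed

lemma red_ident:
  assumes fV: "finite V" and RV: "R \<subseteq> V" and SR: "S \<subseteq> R"
  shows "set_weight R rw wo wu S + ext_weight V wu R + (\<Sum>u\<in>S. wv u) + (\<Sum>u\<in>S. \<Sum>v\<in>V-R. wo u v)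
    = set_weight V wv wo wu S + (\<Sum>u\<in>S. rw u) + (\<Sum>u\<in>S. \<Sum>v\<in>V-R. wu{u,v})"
proof -
  have fR: "finite R" using fV RV finite_subset by blast
  have fS: "finite S" using fR SR finite_subset by blast
  have VS: "V - S = (R - S) \<union> (V - R)" using SR RV by auto
  have e1: "sum wu (pairs (V - S)) = sum wu (pairs (R - S)) + sum wu (pairs (V - R)) + (\<Sum>a\<in>R-S. \<Sum>b\<in>V-R. wu {a,b})"
    unfolding VS by (rule pairs_union_sum) (use fV fR in auto)
  have e2: "(\<Sum>u\<in>S. \<Sum>v\<in>V-S. wo u v) = (\<Sum>u\<in>S. \<Sum>v\<in>R-S. wo u v) + (\<Sum>u\<in>S. \<Sum>v\<in>V-R. wo u v)"
    unfolding VS sum.distrib[symmetric]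
    by (rule sum.cong[OF refl], rule sum.union_disjoint) (use fV fR in auto)
  have e3: "(\<Sum>u\<in>R. \<Sum>v\<in>V-R. wu{u,v}) = (\<Sum>u\<in>R-S. \<Sum>v\<in>V-R. wu{u,v}) + (\<Sum>u\<in>S. \<Sum>v\<in>V-R. wu{u,v})"
    using sum.subset_diff[OF SR fR] .
  show ?thesis unfolding set_weight_def ext_weight_def using e1 e2 e3 by linarith
qed

definition cc :: "'a set \<Rightarrow> ('a \<Rightarrow> 'a \<Rightarrow> nat) \<Rightarrow> ('a set \<Rightarrow> nat) \<Rightarrow> 'a set \<Rightarrow> 'a \<Rightarrow> int" where
  "cc V wo wu R u = (\<Sum>v\<in>V - R. int (wu {u, v}) - int (wo u v))"

definition ff :: "'a set \<Rightarrow> ('a \<Rightarrow> nat) \<Rightarrow> ('a \<Rightarrow> 'a \<Rightarrow> nat) \<Rightarrow> ('a set \<Rightarrow> nat) \<Rightarrow> 'a set \<Rightarrow> 'a \<Rightarrow> int" where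
  "ff V wv wo wu R u = max (int (wv u) - cc V wo wu R u) 0 + cc V wo wu R u - int (wv u)"

lemma int_ident:
  assumes fV: "finite V" and RV: "R \<subseteq> V" and SR: "S \<subseteq> R"
  shows "int (set_weight R (red_wv V wv wo wu R) wo wu S) + int (ext_weight V wu R)
    = int (set_weight V wv wo wu S) + (\<Sum>u\<in>S. ff V wv wo wu R u)"
proof -
  have h: "int (set_weight R (red_wv V wv wo wu R) wo wu S) + int (ext_weight V wu R) + (\<Sum>u\<in>S. int (wv u)) + (\<Sum>u\<in>S. \<Sum>v\<in>V-R. int (wo u v))
    = int (set_weight V wv wo wu S) + (\<Sum>u\<in>S. int (red_wv V wv wo wu R u)) + (\<Sum>u\<in>S. \<Sum>v\<in>V-R. int (wu{u,v}))"
    using arg_cong[OF red_ident[OF fV RV SR, of "red_wv V wv wo wu R" wo wu wv], of int]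
    by (simp add: of_nat_sum)
  have r: "\<And>u. int (red_wv V wv wo wu R u) = max (int (wv u) - cc V wo wu R u) 0"
    unfolding red_wv_def cc_def by simp
  have "(\<Sum>u\<in>S. ff V wv wo wu R u) = (\<Sum>u\<in>S. int (red_wv V wv wo wu R u)) + (\<Sum>u\<in>S. \<Sum>v\<in>V-R. int (wu{u,v}))
      - (\<Sum>u\<in>S. \<Sum>v\<in>V-R. int (wo u v)) - (\<Sum>u\<in>S. int (wv u))"
    unfolding ff_def r cc_def by (simp add: sum.distrib sum_subtractf)
  with h show ?thesis by linarith
qed

lemma alpha_fin: "finite R \<Longrightarrow> finite {set_weight R w wo wu S | S. stable_set R \<theta> S}"
  by (rule finite_subset[of _ "(\<lambda>S. set_weight R w wo wu S) ` Pow R"]) (auto simp: stable_set_def)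

lemma alpha_ge: "finite R \<Longrightarrow> stable_set R \<theta> S \<Longrightarrow> set_weight R w wo wu S \<le> alpha R \<theta> w wo wu"
  unfolding alpha_def by (rule Max_ge[OF alpha_fin]) auto

lemma alpha_in: "finite R \<Longrightarrow> \<exists>S. stable_set R \<theta> S \<and> alpha R \<theta> w wo wu = set_weight R w wo wu S"
proof -
  assume f: "finite R"
  have "stable_set R \<theta> {}" by (simp add: stable_set_def)
  then have "alpha R \<theta> w wo wu \<in> {set_weight R w wo wu S | S. stable_set R \<theta> S}"
    unfolding alpha_def by (intro Max_in[OF alpha_fin[OF f]]) auto
  then show ?thesis by auto
qed

lemma ff_nonneg: "0 \<le> ff V wv wo wu R u"
  unfolding ff_def by linarith

lemma cc_le:
  assumes wf: "weight_function V \<theta> wv wo wu" and fV: "finite V"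
    and A1: "V - R \<subseteq> A" and A2: "A \<subseteq> V" and u: "u \<in> V" "u \<notin> A"
  shows "cc V wo wu R u \<le> (\<Sum>v\<in>A. int (wu {u, v}) - int (wo u v))"
  unfolding cc_def
proof (rule sum_mono2)
  show "finite A" using fV A2 finite_subset by blast
  show "V - R \<subseteq> A" by fact
  fix b assume "b \<in> A - (V - R)"
  then have "b \<in> V" "u \<noteq> b" using A2 u by auto
  then have "wo u b \<le> wu {u, b}" using wf u unfolding weight_function_def by blast
  then show "0 \<le> int (wu {u, b}) - int (wo u b)" by simp
qed

lemma cc_nonneg:
  assumes wf: "weight_function V \<theta> wv wo wu" and RV: "R \<subseteq> V" and u: "u \<in> R"
  shows "0 \<le> cc V wo wu R u"
  unfolding cc_def
proof (rule sum_nonneg)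
  fix b assume "b \<in> V - R"
  then have "b \<in> V" "u \<noteq> b" "u \<in> V" using RV u by auto
  then have "wo u b \<le> wu {u, b}" using wf unfolding weight_function_def by blast
  then show "0 \<le> int (wu {u, b}) - int (wo u b)" by simp
qed

lemma removal_int:
  assumes fV: "finite V" and SV: "S \<subseteq> V" and TS: "T \<subseteq> S"
  shows "int (set_weight V wv wo wu S) + (\<Sum>u\<in>T. \<Sum>v\<in>V-S. int (wu{u,v}) - int (wo u v))
     \<le> int (set_weight V wv wo wu (S - T)) + (\<Sum>u\<in>T. int (wv u))"
proof -
  have "int (set_weight V wv wo wu S + (\<Sum>u\<in>T. \<Sum>v\<in>V-S. wu{u,v}))
     \<le> int (set_weight V wv wo wu (S - T) + (\<Sum>u\<in>T. wv u) + (\<Sum>u\<in>T. \<Sum>v\<in>V-S. wo u v))"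
    using removal[OF fV SV TS, of wv wo wu] by linarith
  then show ?thesis by (simp add: sum_subtractf)
qed

theorem proposition3p8:
  fixes V :: "'a set" and \<theta> :: "'a set \<Rightarrow> int"
    and wv :: "'a \<Rightarrow> nat" and wo :: "'a \<Rightarrow> 'a \<Rightarrow> nat" and wu :: "'a set \<Rightarrow> nat"
    and R1 R2 :: "'a set"
  assumes "trigraph V \<theta>" and "weight_function V \<theta> wv wo wu"
    and "R1 \<subseteq> V" and "R2 \<subseteq> V" and "R1 \<inter> R2 = {}"
  shows "alpha_red V \<theta> wv wo wu R1 \<le> alpha_red V \<theta> wv wo wu (R1 \<union> R2)
    \<and> alpha_red V \<theta> wv wo wu (R1 \<union> R2) \<le> alpha_red V \<theta> wv wo wu R1 + (\<Sum>u\<in>R2. wv u)"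
proof
  note wf = assms(2)
  have fV: "finite V" using assms(1) unfolding trigraph_def by blast
  define Q where "Q = R1 \<union> R2"
  have QV: "Q \<subseteq> V" using assms unfolding Q_def by auto
  have fR1: "finite R1" using fV assms(3) finite_subset by blast
  have fR2: "finite R2" using fV assms(4) finite_subset by blast
  have fQ: "finite Q" using fV QV finite_subset by blast
  show "alpha_red V \<theta> wv wo wu R1 \<le> alpha_red V \<theta> wv wo wu (R1 \<union> R2)"
  proof -
    obtain S where S: "stable_set R1 \<theta> S"
      and Se: "alpha R1 \<theta> (red_wv V wv wo wu R1) wo wu = set_weight R1 (red_wv V wv wo wu R1) wo wu S"
      using alpha_in[OF fR1] by blast
    have SR1: "S \<subseteq> R1" using S unfolding stable_set_def by blast
    have SV: "S \<subseteq> V" using SR1 assms(3) by blast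
    have fS: "finite S" using fR1 SR1 finite_subset by blast
    define T where "T = {u\<in>S. int (wv u) < cc V wo wu R1 u}"
    have TS: "T \<subseteq> S" unfolding T_def by blast
    have st': "stable_set Q \<theta> (S - T)" using S unfolding stable_set_def Q_def by blast
    have I1: "int (alpha_red V \<theta> wv wo wu R1) = int (set_weight V wv wo wu S) + (\<Sum>u\<in>S. ff V wv wo wu R1 u)"
      unfolding alpha_red_def Se using int_ident[OF fV assms(3) SR1] by simp
    have "(\<Sum>u\<in>S. ff V wv wo wu R1 u) = (\<Sum>u\<in>S-T. ff V wv wo wu R1 u) + (\<Sum>u\<in>T. ff V wv wo wu R1 u)"
      using sum.subset_diff[OF TS fS] .
    also have "(\<Sum>u\<in>S-T. ff V wv wo wu R1 u) = 0"
      by (rule sum.neutral) (auto simp: T_def ff_def)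
    also have "(\<Sum>u\<in>T. ff V wv wo wu R1 u) = (\<Sum>u\<in>T. cc V wo wu R1 u - int (wv u))"
      by (rule sum.cong) (auto simp: T_def ff_def)
    finally have I2: "(\<Sum>u\<in>S. ff V wv wo wu R1 u) = (\<Sum>u\<in>T. cc V wo wu R1 u) - (\<Sum>u\<in>T. int (wv u))"
      by (simp add: sum_subtractf)
    have I3: "(\<Sum>u\<in>T. cc V wo wu R1 u) \<le> (\<Sum>u\<in>T. \<Sum>v\<in>V-S. int (wu{u,v}) - int (wo u v))"
      by (rule sum_mono, rule cc_le[OF wf fV]) (use SR1 SV TS in auto)
    have I4: "int (set_weight V wv wo wu (S - T)) \<le> int (alpha_red V \<theta> wv wo wu Q)"
    proof -
      have "int (set_weight V wv wo wu (S - T)) \<le> int (set_weight V wv wo wu (S - T)) + (\<Sum>u\<in>S-T. ff V wv wo wu Q u)"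
        using sum_nonneg[of "S - T" "ff V wv wo wu Q", OF ff_nonneg] by linarith
      also have "\<dots> = int (set_weight Q (red_wv V wv wo wu Q) wo wu (S - T)) + int (ext_weight V wu Q)"
        by (rule int_ident[OF fV QV, symmetric]) (use SR1 in \<open>auto simp: Q_def\<close>)
      also have "\<dots> \<le> int (alpha_red V \<theta> wv wo wu Q)"
        unfolding alpha_red_def using alpha_ge[OF fQ st'] by simp
      finally show ?thesis .
    qed
    have "int (alpha_red V \<theta> wv wo wu R1) \<le> int (alpha_red V \<theta> wv wo wu Q)"
      using I1 I2 I3 I4 removal_int[OF fV SV TS, of wv wo wu] by linarith
    then show ?thesis unfolding Q_def by simp
  qed
  show "alpha_red V \<theta> wv wo wu (R1 \<union> R2) \<le> alpha_red V \<theta> wv wo wu R1 + (\<Sum>u\<in>R2. wv u)"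
  proof -
    obtain S where S: "stable_set Q \<theta> S"
      and Se: "alpha Q \<theta> (red_wv V wv wo wu Q) wo wu = set_weight Q (red_wv V wv wo wu Q) wo wu S"
      using alpha_in[OF fQ] by blast
    have SQ: "S \<subseteq> Q" using S unfolding stable_set_def by blast
    have SV: "S \<subseteq> V" using SQ QV by blast
    have fS: "finite S" using fQ SQ finite_subset by blast
    define X where "X = S \<inter> R2"
    have XS: "X \<subseteq> S" unfolding X_def by blast
    have S1R1: "S - X \<subseteq> R1" using SQ unfolding X_def Q_def by blast
    have st1: "stable_set R1 \<theta> (S - X)" using S S1R1 unfolding stable_set_def by blast
    have J1: "int (alpha_red V \<theta> wv wo wu Q) = int (set_weight V wv wo wu S) + (\<Sum>u\<in>S. ff V wv wo wu Q u)"
      unfolding alpha_red_def Se using int_ident[OF fV QV SQ] by simp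
    have J2: "(\<Sum>u\<in>S. ff V wv wo wu Q u) = (\<Sum>u\<in>S-X. ff V wv wo wu Q u) + (\<Sum>u\<in>X. ff V wv wo wu Q u)"
      using sum.subset_diff[OF XS fS] .
    have J3: "(\<Sum>u\<in>X. cc V wo wu Q u) \<le> (\<Sum>u\<in>X. \<Sum>v\<in>V-S. int (wu{u,v}) - int (wo u v))"
      by (rule sum_mono, rule cc_le[OF wf fV]) (use SQ SV XS in auto)
    have J4: "(\<Sum>u\<in>X. ff V wv wo wu Q u) \<le> (\<Sum>u\<in>X. cc V wo wu Q u)"
    proof (rule sum_mono)
      fix u assume "u \<in> X"
      then have "0 \<le> cc V wo wu Q u" using cc_nonneg[OF wf QV] XS SQ by blast
      then show "ff V wv wo wu Q u \<le> cc V wo wu Q u" unfolding ff_def by linarith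
    qed
    have J5: "(\<Sum>u\<in>S-X. ff V wv wo wu Q u) \<le> (\<Sum>u\<in>S-X. ff V wv wo wu R1 u)"
    proof (rule sum_mono)
      fix u assume u: "u \<in> S - X"
      have "cc V wo wu Q u \<le> cc V wo wu R1 u"
        unfolding cc_def[of V wo wu R1]
        by (rule cc_le[OF wf fV]) (use u S1R1 assms(3) in \<open>auto simp: Q_def\<close>)
      then show "ff V wv wo wu Q u \<le> ff V wv wo wu R1 u" unfolding ff_def max_def by auto
    qed
    have J6: "int (set_weight V wv wo wu (S - X)) + (\<Sum>u\<in>S-X. ff V wv wo wu R1 u) \<le> int (alpha_red V \<theta> wv wo wu R1)"
    proof -
      have "int (set_weight V wv wo wu (S - X)) + (\<Sum>u\<in>S-X. ff V wv wo wu R1 u)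
          = int (set_weight R1 (red_wv V wv wo wu R1) wo wu (S - X)) + int (ext_weight V wu R1)"
        using int_ident[OF fV assms(3) S1R1] by simp
      also have "\<dots> \<le> int (alpha_red V \<theta> wv wo wu R1)"
        unfolding alpha_red_def using alpha_ge[OF fR1 st1] by simp
      finally show ?thesis .
    qed
    have J7: "(\<Sum>u\<in>X. int (wv u)) \<le> (\<Sum>u\<in>R2. int (wv u))"
      by (rule sum_mono2[OF fR2]) (auto simp: X_def)
    have "int (alpha_red V \<theta> wv wo wu Q) \<le> int (alpha_red V \<theta> wv wo wu R1) + (\<Sum>u\<in>R2. int (wv u))"
      using J1 J2 J3 J4 J5 J6 J7 removal_int[OF fV SV XS, of wv wo wu] by linarith
    then show ?thesis unfolding Q_def by (simp add: of_nat_sum[symmetric] del: of_nat_sum)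
  qed
qed

end
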